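(* Fix $k\ge1$ and $\ell\ge1$. For every integer $j$ with $1+F_{2\ell+1}\le j\le F_{2\ell+3}-1$, $$q(j+1)-q(j)=q(j-F_{2\ell+1}+1)-q(j-F_{2\ell+1}).$$
   Context: Fibonacci numbers: $F_1=F_2=1$, $F_{n+1}=F_n+F_{n-1}$ for $n\ge2$. Chung–Graham decomposition: every positive integer $n$ has a unique representation $n=\sum_{i\ge1}c_iF_{2i}$ with $c_i\in\{0,1,2\}$, only finitely many nonzero, such that whenever $c_i=c_j=2$ with $i<j$ there is $k$ with $i<k<j$ and $c_k=0$. Let $\mathcal{CG}(n)$ be the set of $F_{2i}$ with $c_i\neq0$. For $k\ge1$, $A_{2k}=\{n\ge1:\min\mathcal{CG}(n)=F_{2k}\}$, and $q(1)<q(2)<q(3)<\cdots$ denote the elements of $A_{2k}$ listed in increasing order. *)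

theory Defs
  imports "HOL-Number_Theory.Fib" "HOL-Library.Infinite_Set"
begin

text \<open>Fibonacci numbers: library fib with fib 1 = fib 2 = 1.
  A Chung--Graham representation of n is a coefficient sequence c, indexed by i >= 1
  (we normalise c 0 = 0), with values in {0,1,2}, finite support,
  n = sum of c i * F(2i), and between any two 2's there is a 0.\<close>

definition is_CG_rep :: "nat \<Rightarrow> (nat \<Rightarrow> nat) \<Rightarrow> bool" where
  "is_CG_rep n c \<longleftrightarrow>
     c 0 = 0 \<and> (\<forall>i. c i \<le> 2) \<and> finite {i. c i \<noteq> 0} \<and>
     n = (\<Sum>i\<in>{i. c i \<noteq> 0}. c i * fib (2 * i)) \<and>
     (\<forall>i j. 1 \<le> i \<longrightarrow> i < j \<longrightarrow> c i = 2 \<longrightarrow> c j = 2 \<longrightarrow>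
        (\<exists>k. i < k \<and> k < j \<and> c k = 0))"

definition CG_coeffs :: "nat \<Rightarrow> nat \<Rightarrow> nat" where
  "CG_coeffs n = (THE c. is_CG_rep n c)"

definition CG :: "nat \<Rightarrow> nat set" where
  "CG n = {fib (2 * i) | i. 1 \<le> i \<and> CG_coeffs n i \<noteq> 0}"

definition A :: "nat \<Rightarrow> nat set" where
  "A k = {n. 1 \<le> n \<and> Min (CG n) = fib (2 * k)}"

text \<open>q k j = j-th smallest element of A_{2k} (1-indexed).\<close>
definition q :: "nat \<Rightarrow> nat \<Rightarrow> nat" where
  "q k j = enumerate (A k) (j - 1)"

end

theory Submission
  imports Defs
begin

definition Gf :: "nat \<Rightarrow> nat" where "Gf i = fib (2 * i)"
definition Sf :: "nat \<Rightarrow> nat" where "Sf m = (\<Sum>i=1..m. Gf i)"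

lemma Gf_0[simp]: "Gf 0 = 0" by (simp add: Gf_def)
lemma Gf_1[simp]: "Gf 1 = 1" by (simp add: Gf_def)
lemma Gf_Suc0[simp]: "Gf (Suc 0) = 1" by (simp add: Gf_def)

lemma Gf_rec: "Gf (Suc (Suc i)) + Gf i = 3 * Gf (Suc i)"
proof -
  have e1: "2 * Suc (Suc i) = Suc (Suc (Suc (Suc (2*i))))" by simp
  have e2: "2 * Suc i = Suc (Suc (2*i))" by simp
  show ?thesis unfolding Gf_def e1 e2 by simp
qed

lemma Gf_less: "Gf i < Gf (Suc i)"
proof -
  have e2: "2 * Suc i = Suc (Suc (2*i))" by simp
  have "fib (Suc (2*i)) > 0" by (simp add: fib_neq_0_nat)
  then show ?thesis unfolding Gf_def e2 by simp
qed

lemma Gf_strict: "i < j \<Longrightarrow> Gf i < Gf j"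
  by (induction j) (auto simp: less_Suc_eq intro: less_trans Gf_less)

lemma Gf_mono: "i \<le> j \<Longrightarrow> Gf i \<le> Gf j"
  by (metis Gf_strict le_less)

lemma Gf_pos: "1 \<le> i \<Longrightarrow> 1 \<le> Gf i"
  using Gf_mono[of 1 i] by simp

lemma Gf_ge: "i \<le> Gf i"
  by (induction i) (auto simp: Suc_le_eq intro: le_less_trans Gf_less)

lemma Gf_double: "2 * Gf (Suc m) \<le> Gf (Suc (Suc m))"
  using Gf_rec[of m] Gf_less[of m] by simp

lemma Sf_0[simp]: "Sf 0 = 0" by (simp add: Sf_def)
lemma Sf_Suc: "Sf (Suc m) = Sf m + Gf (Suc m)" by (simp add: Sf_def)

lemma Sf_id: "Sf m + Gf m + 1 = Gf (Suc m)"
proof (induction m)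
  case 0 then show ?case by simp
next
  case (Suc m)
  then show ?case using Gf_rec[of m] by (simp add: Sf_Suc)
qed

lemma Sf_less: "Sf m < Gf (Suc m)" using Sf_id[of m] by simp


definition val :: "(nat \<Rightarrow> nat) \<Rightarrow> nat \<Rightarrow> nat" where
  "val c m = (\<Sum>i=1..m. c i * Gf i)"

definition valid :: "(nat \<Rightarrow> nat) \<Rightarrow> bool" where
  "valid c \<longleftrightarrow> c 0 = 0 \<and> (\<forall>i. c i \<le> 2) \<and>
     (\<forall>i j. 1 \<le> i \<longrightarrow> i < j \<longrightarrow> c i = 2 \<longrightarrow> c j = 2 \<longrightarrow>
        (\<exists>k. i < k \<and> k < j \<and> c k = 0))"

definition supp :: "(nat \<Rightarrow> nat) \<Rightarrow> nat \<Rightarrow> bool" where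
  "supp c m \<longleftrightarrow> (\<forall>i>m. c i = 0)"

definition ob :: "(nat \<Rightarrow> nat) \<Rightarrow> nat \<Rightarrow> bool" where
  "ob c m \<longleftrightarrow> (\<forall>j\<le>m. c j = 2 \<longrightarrow> (\<exists>t. j < t \<and> t \<le> m \<and> c t = 0))"

lemma val_0[simp]: "val c 0 = 0" by (simp add: val_def)
lemma val_Suc: "val c (Suc m) = val c m + c (Suc m) * Gf (Suc m)"
  by (simp add: val_def)

lemma val_upd: "m < p \<Longrightarrow> val (c(p := v)) m = val c m"
  unfolding val_def by (rule sum.cong) auto

lemma val_cong: "(\<And>i. 1 \<le> i \<Longrightarrow> i \<le> m \<Longrightarrow> c i = d i) \<Longrightarrow> val c m = val d m"
  unfolding val_def by (rule sum.cong) auto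

lemma val_ge: "1 \<le> i \<Longrightarrow> i \<le> m \<Longrightarrow> c i * Gf i \<le> val c m"
  unfolding val_def by (rule member_le_sum) auto

lemma bound: "valid c \<Longrightarrow> val c m < Gf (Suc m) \<and> (ob c m \<longrightarrow> val c m \<le> Sf m)"
proof (induction m)
  case 0 then show ?case by simp
next
  case (Suc m)
  have IH: "val c m < Gf (Suc m)" "ob c m \<Longrightarrow> val c m \<le> Sf m" using Suc by auto
  have c2: "c (Suc m) \<le> 2" using Suc.prems by (simp add: valid_def)
  have id: "Sf m + 2 * Gf (Suc m) + 1 = Gf (Suc (Suc m))"
    using Sf_id[of "Suc m"] by (simp add: Sf_Suc)
  have sl: "Sf m < Gf (Suc m)" by (rule Sf_less)
  consider "c (Suc m) = 0" | "c (Suc m) = 1" | "c (Suc m) = 2" using c2 by linarith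
  then show ?case
  proof cases
    case 1
    then show ?thesis using IH(1) Gf_less[of "Suc m"] by (simp add: val_Suc Sf_Suc)
  next
    case 2
    have "ob c (Suc m) \<Longrightarrow> ob c m"
      unfolding ob_def
    proof (intro allI impI)
      fix j assume ob1: "\<forall>j\<le>Suc m. c j = 2 \<longrightarrow> (\<exists>t>j. t \<le> Suc m \<and> c t = 0)" and j: "j \<le> m" "c j = 2"
      then obtain t where "t>j" "t \<le> Suc m" "c t = 0" using le_SucI[OF j(1)] by blast
      then show "\<exists>t>j. t \<le> m \<and> c t = 0" using 2 by (intro exI[of _ t]) (auto simp: le_Suc_eq)
    qed
    then show ?thesis using IH 2 Gf_double[of m] by (auto simp: val_Suc Sf_Suc)
  next
    case 3
    have obm: "ob c m"
      unfolding ob_def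
    proof (intro allI impI)
      fix j assume j: "j \<le> m" "c j = 2"
      have "j \<noteq> 0" using Suc.prems j(2) unfolding valid_def by (metis zero_neq_numeral)
      then obtain t where "j < t" "t < Suc m" "c t = 0"
        using Suc.prems j 3 unfolding valid_def by (metis le_imp_less_Suc less_one not_le)
      then show "\<exists>t>j. t \<le> m \<and> c t = 0" by auto
    qed
    have nob: "\<not> ob c (Suc m)" unfolding ob_def using 3 by auto
    show ?thesis using IH(2)[OF obm] 3 id nob by (simp add: val_Suc)
  qed
qed

lemma valid_zero: "valid (\<lambda>_. 0)" by (simp add: valid_def)

lemma ext0: "supp c m \<Longrightarrow> supp c (Suc m) \<and> val c (Suc m) = val c m \<and> ob c (Suc m)"
proof -
  assume s: "supp c m"
  have "ob c (Suc m)" unfolding ob_def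
  proof (intro allI impI)
    fix j assume j: "j \<le> Suc m" "c j = 2"
    then have "j \<noteq> Suc m" using s by (auto simp: supp_def)
    then show "\<exists>t>j. t \<le> Suc m \<and> c t = 0" using j s by (intro exI[of _ "Suc m"]) (auto simp: supp_def)
  qed
  then show ?thesis using s by (auto simp: supp_def val_Suc)
qed

lemma ext1: assumes "valid c" "supp c m"
  shows "valid (c(Suc m := 1)) \<and> supp (c(Suc m := 1)) (Suc m) \<and>
         val (c(Suc m := 1)) (Suc m) = val c m + Gf (Suc m) \<and>
         (ob c m \<longrightarrow> ob (c(Suc m := 1)) (Suc m))"
proof (intro conjI impI)
  show "valid (c(Suc m := 1))"
    unfolding valid_def
  proof (intro conjI allI impI)
    show "(c(Suc m := 1)) 0 = 0" using assms by (simp add: valid_def)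
    show "\<And>i. (c(Suc m := 1)) i \<le> 2" using assms by (simp add: valid_def)
    fix i j assume h: "1 \<le> i" "i < j" "(c(Suc m := 1)) i = 2" "(c(Suc m := 1)) j = 2"
    then have cj: "c j = 2" "c i = 2" "j \<noteq> Suc m" by (auto split: if_splits)
    then have "j \<le> m" using assms(2) unfolding supp_def by (metis not_le zero_neq_numeral)
    obtain k where "i < k" "k < j" "c k = 0" using assms(1) h cj unfolding valid_def by blast
    then show "\<exists>k>i. k < j \<and> (c(Suc m := 1)) k = 0" using \<open>j \<le> m\<close> by (intro exI[of _ k]) auto
  qed
  show "supp (c(Suc m := 1)) (Suc m)" using assms by (simp add: supp_def)
  show "val (c(Suc m := 1)) (Suc m) = val c m + Gf (Suc m)"
    by (simp add: val_Suc val_upd)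
  assume "ob c m" then show "ob (c(Suc m := 1)) (Suc m)"
    unfolding ob_def
  proof (intro allI impI)
    fix j assume j: "j \<le> Suc m" "(c(Suc m := 1)) j = 2"
    then have "j \<le> m" "c j = 2" by (auto simp: le_Suc_eq split: if_splits)
    then obtain t where "j < t" "t \<le> m" "c t = 0" using \<open>ob c m\<close> unfolding ob_def by blast
    then show "\<exists>t>j. t \<le> Suc m \<and> (c(Suc m := 1)) t = 0" by (intro exI[of _ t]) auto
  qed
qed

lemma ext2: assumes "valid c" "supp c m" "ob c m"
  shows "valid (c(Suc m := 2)) \<and> supp (c(Suc m := 2)) (Suc m) \<and>
         val (c(Suc m := 2)) (Suc m) = val c m + 2 * Gf (Suc m)"
proof (intro conjI)
  show "valid (c(Suc m := 2))"
    unfolding valid_def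
  proof (intro conjI allI impI)
    show "(c(Suc m := 2)) 0 = 0" using assms by (simp add: valid_def)
    show "\<And>i. (c(Suc m := 2)) i \<le> 2" using assms by (simp add: valid_def)
    fix i j assume h: "1 \<le> i" "i < j" "(c(Suc m := 2)) i = 2" "(c(Suc m := 2)) j = 2"
    show "\<exists>k>i. k < j \<and> (c(Suc m := 2)) k = 0"
    proof (cases "j = Suc m")
      case True
      then have "i \<le> m" "c i = 2" using h by auto
      then obtain t where "i < t" "t \<le> m" "c t = 0" using assms(3) unfolding ob_def by blast
      then show ?thesis using True by (intro exI[of _ t]) auto
    next
      case False
      then have cj: "c j = 2" using h by auto
      then have "j \<le> m" using assms(2) unfolding supp_def by (metis not_le zero_neq_numeral)
      then have "c i = 2" using h by auto
      then obtain k where "i < k" "k < j" "c k = 0" using assms(1) h cj unfolding valid_def by blast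
      then show ?thesis using \<open>j \<le> m\<close> by (intro exI[of _ k]) auto
    qed
  qed
  show "supp (c(Suc m := 2)) (Suc m)" using assms by (simp add: supp_def)
  show "val (c(Suc m := 2)) (Suc m) = val c m + 2 * Gf (Suc m)"
    by (simp add: val_Suc val_upd)
qed


lemma existence: "n < Gf (Suc m) \<Longrightarrow> \<exists>c. valid c \<and> supp c m \<and> val c m = n \<and> (n \<le> Sf m \<longrightarrow> ob c m)"
proof (induction m arbitrary: n)
  case 0
  then have "n = 0" by simp
  then show ?case using valid_zero by (intro exI[of _ "\<lambda>_. 0"]) (auto simp: supp_def ob_def)
next
  case (Suc m)
  have id: "Sf m + 2 * Gf (Suc m) + 1 = Gf (Suc (Suc m))"
    using Sf_id[of "Suc m"] by (simp add: Sf_Suc)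
  have sl: "Sf m < Gf (Suc m)" by (rule Sf_less)
  consider "n < Gf (Suc m)" | "Gf (Suc m) \<le> n" "n < 2 * Gf (Suc m)" | "2 * Gf (Suc m) \<le> n" by linarith
  then show ?case
  proof cases
    case 1
    then obtain c where c: "valid c" "supp c m" "val c m = n" using Suc.IH by blast
    then show ?thesis using ext0[OF c(2)] by (intro exI[of _ c]) auto
  next
    case 2
    define r where "r = n - Gf (Suc m)"
    have r: "r < Gf (Suc m)" using 2 by (simp add: r_def)
    then obtain c where c: "valid c" "supp c m" "val c m = r" "r \<le> Sf m \<longrightarrow> ob c m" using Suc.IH by blast
    have "n \<le> Sf (Suc m) \<Longrightarrow> r \<le> Sf m" using 2 by (simp add: r_def Sf_Suc)
    moreover have "val c m + Gf (Suc m) = n" using c(3) 2 by (simp add: r_def)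
    ultimately have "n \<le> Sf (Suc m) \<longrightarrow> ob c m" using c(4) by blast
    then show ?thesis using ext1[OF c(1,2)] \<open>val c m + Gf (Suc m) = n\<close> by metis
  next
    case 3
    define r where "r = n - 2 * Gf (Suc m)"
    have r: "r \<le> Sf m" using 3 Suc.prems id by (simp add: r_def)
    then have "r < Gf (Suc m)" using sl by linarith
    then obtain c where c: "valid c" "supp c m" "val c m = r" "r \<le> Sf m \<longrightarrow> ob c m" using Suc.IH by blast
    have "\<not> n \<le> Sf (Suc m)" using 3 sl by (simp add: Sf_Suc)
    moreover have "val c m + 2 * Gf (Suc m) = n" using c(3) 3 by (simp add: r_def)
    moreover have "ob c m" using c(4) r by blast
    ultimately show ?thesis using ext2[OF c(1,2)] by metis
  qed
qed

lemma valid_restrict: "valid c \<Longrightarrow> valid (c(p := 0))"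
  unfolding valid_def
proof (intro conjI allI impI; (elim conjE)?)
  assume h: "c 0 = 0" "\<forall>i. c i \<le> 2" "\<forall>i j. 1 \<le> i \<longrightarrow> i < j \<longrightarrow> c i = 2 \<longrightarrow> c j = 2 \<longrightarrow> (\<exists>k>i. k < j \<and> c k = 0)"
  show "(c(p := 0)) 0 = 0" using h by simp
  show "\<And>i. (c(p := 0)) i \<le> 2" using h by simp
  fix i j assume a: "1 \<le> i" "i < j" "(c(p := 0)) i = 2" "(c(p := 0)) j = 2"
  then have "c i = 2" "c j = 2" by (auto split: if_splits)
  then obtain k where "k > i" "k < j" "c k = 0" using h a by blast
  then show "\<exists>k>i. k < j \<and> (c(p := 0)) k = 0" by (intro exI[of _ k]) auto
qed

lemma divmod_uniq:
  fixes a b x y g :: nat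
  assumes "a * g + x = b * g + y" "x < g" "y < g"
  shows "a = b"
proof -
  have "(a * g + x) div g = a" using assms(2) by simp
  moreover have "(b * g + y) div g = b" using assms(3) by simp
  ultimately show ?thesis using assms(1) by metis
qed

lemma uniqueness: "valid c \<Longrightarrow> valid d \<Longrightarrow> supp c m \<Longrightarrow> supp d m \<Longrightarrow> val c m = val d m \<Longrightarrow> c = d"
proof (induction m arbitrary: c d)
  case 0
  have "c 0 = 0" "d 0 = 0" using 0 by (auto simp: valid_def)
  then show ?case using 0 by (auto simp: supp_def fun_eq_iff) (metis gr0I)
next
  case (Suc m)
  have bc: "val c m < Gf (Suc m)" "val d m < Gf (Suc m)" using bound Suc.prems by auto
  have e: "c (Suc m) * Gf (Suc m) + val c m = d (Suc m) * Gf (Suc m) + val d m"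
    using Suc.prems(5) by (simp add: val_Suc)
  have top: "c (Suc m) = d (Suc m)" using divmod_uniq[OF e bc] .
  have "c(Suc m := 0) = d(Suc m := 0)"
  proof (rule Suc.IH)
    show "valid (c(Suc m := 0))" "valid (d(Suc m := 0))" using Suc.prems valid_restrict by auto
    show "supp (c(Suc m := 0)) m" "supp (d(Suc m := 0)) m" using Suc.prems
      by (auto simp: supp_def)
    show "val (c(Suc m := 0)) m = val (d(Suc m := 0)) m"
      using e top by (simp add: val_upd)
  qed
  then show ?case using top by (metis fun_upd_triv fun_upd_upd)
qed


lemma val_eq_sum:
  assumes "c 0 = 0" "supp c m"
  shows "val c m = (\<Sum>i\<in>{i. c i \<noteq> 0}. c i * fib (2 * i))"
proof -
  have sub: "{i. c i \<noteq> 0} \<subseteq> {1..m}"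
  proof
    fix x assume "x \<in> {i. c i \<noteq> 0}"
    then have "c x \<noteq> 0" by simp
    then have "x \<noteq> 0" "\<not> x > m" using assms by (auto simp: supp_def) (metis gr0I)
    then show "x \<in> {1..m}" by simp
  qed
  have "(\<Sum>i\<in>{i. c i \<noteq> 0}. c i * fib (2 * i)) = (\<Sum>i\<in>{1..m}. c i * fib (2 * i))"
    by (rule sum.mono_neutral_left) (use sub in auto)
  then show ?thesis by (simp add: val_def Gf_def)
qed

lemma supp_finite: "supp c m \<Longrightarrow> finite {i. c i \<noteq> 0}"
proof -
  assume s: "supp c m"
  have "{i. c i \<noteq> 0} \<subseteq> {..m}"
  proof
    fix x assume "x \<in> {i. c i \<noteq> 0}"
    then have "\<not> x > m" using s by (auto simp: supp_def)
    then show "x \<in> {..m}" by simp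
  qed
  then show ?thesis by (rule finite_subset) simp
qed

lemma isCG_of: "valid c \<Longrightarrow> supp c m \<Longrightarrow> is_CG_rep (val c m) c"
  unfolding is_CG_rep_def using val_eq_sum[of c m] supp_finite[of c m]
  by (auto simp: valid_def)

lemma CG_of: assumes "is_CG_rep n c" shows "valid c \<and> (\<exists>m. supp c m \<and> val c m = n)"
proof -
  have v: "valid c" using assms by (auto simp: is_CG_rep_def valid_def)
  have f: "finite {i. c i \<noteq> 0}" using assms by (simp add: is_CG_rep_def)
  then obtain m where m: "\<forall>i\<in>{i. c i \<noteq> 0}. i \<le> m" using finite_nat_set_iff_bounded_le by blast
  then have s: "supp c m" by (auto simp: supp_def)
  have "val c m = n" using val_eq_sum[OF _ s] assms v by (simp add: is_CG_rep_def valid_def)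
  then show ?thesis using v s by blast
qed

lemma coeffs_eq: assumes "valid c" "supp c m" shows "CG_coeffs (val c m) = c"
  unfolding CG_coeffs_def
proof (rule the_equality)
  show "is_CG_rep (val c m) c" using isCG_of assms .
  fix d assume "is_CG_rep (val c m) d"
  then obtain m' where d: "valid d" "supp d m'" "val d m' = val c m" using CG_of by blast
  define M where "M = max m m'"
  have sc: "supp c M" "supp d M" using assms(2) d(2) by (auto simp: supp_def M_def)
  have c0: "c 0 = 0" "d 0 = 0" using assms(1) d(1) by (auto simp: valid_def)
  have "val c M = val c m" using val_eq_sum[OF c0(1) sc(1)] val_eq_sum[OF c0(1) assms(2)] by simp
  moreover have "val d M = val d m'" using val_eq_sum[OF c0(2) sc(2)] val_eq_sum[OF c0(2) d(2)] by simp
  ultimately show "d = c" using uniqueness[OF d(1) assms(1) sc(2) sc(1)] d(3) by simp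
qed

lemma Gf_inj: "Gf i = Gf j \<Longrightarrow> i = j"
  by (metis Gf_strict less_irrefl linorder_neqE_nat)

lemma memA:
  assumes "valid c" "supp c m"
  shows "val c m \<in> A k \<longleftrightarrow> 1 \<le> k \<and> c k \<noteq> 0 \<and> (\<forall>i<k. c i = 0)"
proof -
  define I where "I = {i. 1 \<le> i \<and> c i \<noteq> 0}"
  have CGe: "CG (val c m) = Gf ` I"
    unfolding CG_def coeffs_eq[OF assms] I_def Gf_def by auto
  have fI: "finite I" using supp_finite[OF assms(2)] unfolding I_def by (rule finite_subset[rotated]) auto
  have c0: "c 0 = 0" using assms(1) by (simp add: valid_def)
  have monoG: "mono Gf" by (simp add: Gf_mono monoI)
  show ?thesis
  proof
    assume a: "val c m \<in> A k"
    then have v1: "1 \<le> val c m" and mn: "Min (Gf ` I) = Gf k" using CGe by (auto simp: A_def Gf_def)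
    have "I \<noteq> {}"
    proof
      assume "I = {}"
      then have "\<forall>i. 1 \<le> i \<longrightarrow> c i = 0" by (auto simp: I_def)
      then have "val c m = 0" unfolding val_def by simp
      then show False using v1 by simp
    qed
    then have "Gf (Min I) = Gf k" using mn mono_Min_commute[OF monoG fI] by simp
    then have mk: "Min I = k" by (rule Gf_inj)
    have "k \<in> I" using Min_in[OF fI \<open>I \<noteq> {}\<close>] mk by simp
    moreover have "\<forall>i<k. c i = 0"
    proof (intro allI impI)
      fix i assume "i < k"
      then have "i \<notin> I" using Min_le[OF fI] mk by (metis not_le)
      then show "c i = 0" using c0 by (cases i) (auto simp: I_def)
    qed
    ultimately show "1 \<le> k \<and> c k \<noteq> 0 \<and> (\<forall>i<k. c i = 0)" by (simp add: I_def)
  next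
    assume a: "1 \<le> k \<and> c k \<noteq> 0 \<and> (\<forall>i<k. c i = 0)"
    then have kI: "k \<in> I" by (simp add: I_def)
    have "\<forall>i\<in>I. k \<le> i"
    proof
      fix i assume "i \<in> I"
      then have "c i \<noteq> 0" by (simp add: I_def)
      then show "k \<le> i" using a by (metis leI)
    qed
    then have mk: "Min I = k" using kI fI by (intro Min_eqI) auto
    have km: "k \<le> m" using a assms(2) unfolding supp_def by (metis leI less_numeral_extra(3))
    have "c k * Gf k \<le> val c m" using val_ge[of k m c] a km by simp
    moreover have "1 \<le> c k * Gf k" using a Gf_pos[of k] by simp
    ultimately have v1: "1 \<le> val c m" by (metis le_trans mult_le_mono nat_mult_1)
    have "Min (Gf ` I) = Gf k" using mono_Min_commute[OF monoG fI, of] kI mk by (metis empty_iff)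
    then show "val c m \<in> A k" using v1 CGe by (simp add: A_def Gf_def)
  qed
qed


lemma shift1:
  assumes "k \<le> m" "n < Gf (Suc m)"
  shows "Gf (Suc m) + n \<in> A k \<longleftrightarrow> n \<in> A k"
proof -
  obtain c where c: "valid c" "supp c m" "val c m = n" using existence[OF assms(2)] by blast
  have e: "valid (c(Suc m := 1))" "supp (c(Suc m := 1)) (Suc m)"
      "val (c(Suc m := 1)) (Suc m) = Gf (Suc m) + n"
    using ext1[OF c(1,2)] c(3) by auto
  have "Gf (Suc m) + n \<in> A k \<longleftrightarrow> 1 \<le> k \<and> (c(Suc m := 1)) k \<noteq> 0 \<and> (\<forall>i<k. (c(Suc m := 1)) i = 0)"
    using memA[OF e(1,2), of k] e(3) by simp
  also have "\<dots> \<longleftrightarrow> 1 \<le> k \<and> c k \<noteq> 0 \<and> (\<forall>i<k. c i = 0)" using assms(1) by auto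
  also have "\<dots> \<longleftrightarrow> n \<in> A k" using memA[OF c(1,2), of k] c(3) by simp
  finally show ?thesis .
qed

lemma shift2:
  assumes "k \<le> m" "n \<le> Sf m"
  shows "2 * Gf (Suc m) + n \<in> A k \<longleftrightarrow> n \<in> A k"
proof -
  have "n < Gf (Suc m)" using assms(2) Sf_less[of m] by linarith
  then obtain c where c: "valid c" "supp c m" "val c m = n" "n \<le> Sf m \<longrightarrow> ob c m" using existence by blast
  have e: "valid (c(Suc m := 2))" "supp (c(Suc m := 2)) (Suc m)"
      "val (c(Suc m := 2)) (Suc m) = 2 * Gf (Suc m) + n"
    using ext2[OF c(1,2)] c(3,4) assms(2) by auto
  have "2 * Gf (Suc m) + n \<in> A k \<longleftrightarrow> 1 \<le> k \<and> (c(Suc m := 2)) k \<noteq> 0 \<and> (\<forall>i<k. (c(Suc m := 2)) i = 0)"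
    using memA[OF e(1,2), of k] e(3) by simp
  also have "\<dots> \<longleftrightarrow> 1 \<le> k \<and> c k \<noteq> 0 \<and> (\<forall>i<k. c i = 0)" using assms(1) by auto
  also have "\<dots> \<longleftrightarrow> n \<in> A k" using memA[OF c(1,2), of k] c(3) by simp
  finally show ?thesis .
qed

lemma GfA: assumes "1 \<le> k" shows "Gf k \<in> A k" "2 * Gf k \<in> A k"
proof -
  obtain m where k: "k = Suc m" using assms by (cases k) auto
  have z: "valid (\<lambda>_. 0)" "supp (\<lambda>_. 0) m" "ob (\<lambda>_. 0) m" using valid_zero by (auto simp: supp_def ob_def)
  have e1: "valid ((\<lambda>_. 0)(Suc m := 1))" "supp ((\<lambda>_. 0)(Suc m := 1)) (Suc m)"
     "val ((\<lambda>_. 0)(Suc m := 1)) (Suc m) = Gf (Suc m)"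
    using ext1[OF z(1,2)] by (auto simp: val_def)
  have e2: "valid ((\<lambda>_. 0)(Suc m := 2))" "supp ((\<lambda>_. 0)(Suc m := 2)) (Suc m)"
     "val ((\<lambda>_. 0)(Suc m := 2)) (Suc m) = 2 * Gf (Suc m)"
    using ext2[OF z] by (auto simp: val_def)
  show "Gf k \<in> A k" using memA[OF e1(1,2), of k] e1(3) k by simp
  show "2 * Gf k \<in> A k" using memA[OF e2(1,2), of k] e2(3) k by simp
qed

lemma A_infinite: assumes "1 \<le> k" shows "infinite (A k)"
  unfolding infinite_nat_iff_unbounded_le
proof
  fix N
  define m where "m = max k N"
  have "Gf k < Gf (Suc m)" using Gf_strict[of k "Suc m"] by (simp add: m_def)
  then have "Gf (Suc m) + Gf k \<in> A k" using shift1[of k m "Gf k"] GfA[OF assms] by (simp add: m_def)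
  moreover have "N \<le> Gf (Suc m) + Gf k" using Gf_ge[of "Suc m"] by (simp add: m_def)
  ultimately show "\<exists>y\<ge>N. y \<in> A k" by blast
qed

lemma Gf_double_strict: assumes "1 \<le> k" shows "2 * Gf k < Gf (Suc k)"
proof -
  obtain m where k: "k = Suc m" using assms by (cases k) auto
  show ?thesis using Sf_id[of k] k by (simp add: Sf_Suc)
qed

lemma baseA: assumes "1 \<le> k"
  shows "{y \<in> A k. y < Gf (Suc k)} = {Gf k, 2 * Gf k}"
proof
  show "{Gf k, 2 * Gf k} \<subseteq> {y \<in> A k. y < Gf (Suc k)}"
    using GfA[OF assms] Gf_double_strict[OF assms] Gf_less[of k] assms by auto
  show "{y \<in> A k. y < Gf (Suc k)} \<subseteq> {Gf k, 2 * Gf k}"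
  proof
    fix y assume y: "y \<in> {y \<in> A k. y < Gf (Suc k)}"
    then obtain c where c: "valid c" "supp c k" "val c k = y" using existence by blast
    have m: "c k \<noteq> 0" "\<forall>i<k. c i = 0" using memA[OF c(1,2), of k] c(3) y by auto
    obtain m where k: "k = Suc m" using assms by (cases k) auto
    have "val c m = 0" unfolding val_def using m(2) k by simp
    then have "y = c k * Gf k" using c(3) k by (simp add: val_Suc)
    moreover have "c k \<le> 2" using c(1) by (simp add: valid_def)
    ultimately show "y \<in> {Gf k, 2 * Gf k}" using m(1) by (cases "c k"; cases "c k - 1") auto
  qed
qed

lemma baseB: assumes "1 \<le> k"
  shows "{y \<in> A k. y < Sf k + 1} = {Gf k}"
proof -
  obtain m where k: "k = Suc m" using assms by (cases k) auto
  have "Sf k = Sf m + Gf k" using k by (simp add: Sf_Suc)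
  moreover have "Sf m < Gf k" using Sf_less[of m] k by simp
  moreover have "Gf k < Gf (Suc k)" by (rule Gf_less)
  ultimately have "{y \<in> A k. y < Sf k + 1} = {y \<in> A k. y < Gf (Suc k)} \<inter> {y. y < Sf k + 1}"
    using Gf_double[of m] k by auto
  also have "\<dots> = {Gf k}" using baseA[OF assms] \<open>Sf k = Sf m + Gf k\<close> \<open>Sf m < Gf k\<close> by auto
  finally show ?thesis .
qed


lemma card_split:
  fixes X :: "nat set"
  assumes "a \<le> b"
  shows "card {y\<in>X. y < b} = card {y\<in>X. y < a} + card {y\<in>X. a \<le> y \<and> y < b}"
proof -
  have "{y\<in>X. y < b} = {y\<in>X. y < a} \<union> {y\<in>X. a \<le> y \<and> y < b}" using assms by auto
  moreover have "finite {y\<in>X. y < a}" "finite {y\<in>X. a \<le> y \<and> y < b}" by auto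
  ultimately show ?thesis by (simp add: card_Un_disjoint disjoint_iff)
qed

lemma card_shift:
  fixes X :: "nat set"
  assumes "\<forall>n<L. P + n \<in> X \<longleftrightarrow> n \<in> X" "x \<le> L"
  shows "card {y\<in>X. P \<le> y \<and> y < P + x} = card {y\<in>X. y < x}"
proof -
  have "{y\<in>X. P \<le> y \<and> y < P + x} = (\<lambda>n. P + n) ` {y\<in>X. y < x}"
  proof (intro set_eqI iffI)
    fix y assume "y \<in> {y\<in>X. P \<le> y \<and> y < P + x}"
    then have y: "y = P + (y - P)" "y - P < x" "y \<in> X" by auto
    then have "y - P \<in> X" using assms by (metis less_le_trans)
    then have "y - P \<in> {y\<in>X. y < x}" using y by simp
    then show "y \<in> (\<lambda>n. P + n) ` {y\<in>X. y < x}" using y(1) by (metis image_eqI)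
  qed (use assms in auto)
  then show ?thesis by (simp add: card_image)
qed

lemma fibs:
  "fib (2 * Suc d + 3) = 2 * fib (2 * d + 3) + fib (2 * d + 2)"
  "fib (2 * Suc d + 2) = fib (2 * d + 3) + fib (2 * d + 2)"
proof -
  have f1: "fib ((2*d+2)+2) = fib ((2*d+2)+1) + fib (2*d+2)" by (rule fib_plus_2)
  have f2: "fib ((2*d+3)+2) = fib ((2*d+3)+1) + fib (2*d+3)" by (rule fib_plus_2)
  have a: "2 * Suc d + 3 = (2*d+3)+2" "2 * Suc d + 2 = (2*d+2)+2" "(2*d+3)+1 = (2*d+2)+2"
    "(2*d+2)+1 = 2*d+3" by simp_all
  show "fib (2 * Suc d + 3) = 2 * fib (2 * d + 3) + fib (2 * d + 2)"
    unfolding a(1) f2 a(3) f1 a(4) by simp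
  show "fib (2 * Suc d + 2) = fib (2 * d + 3) + fib (2 * d + 2)"
    unfolding a(2) f1 a(4) by simp
qed

lemma counts:
  assumes "1 \<le> k" "k \<le> m"
  shows "card {y\<in>A k. y < Gf (Suc m)} = fib (2 * (m - k) + 3) \<and>
         card {y\<in>A k. y < Sf m + 1} = fib (2 * (m - k) + 2)"
  using assms(2)
proof (induction m rule: dec_induct)
  case base
  have "fib 3 = 2" by (simp add: numeral_3_eq_3)
  moreover have "Gf k \<noteq> 2 * Gf k" using Gf_pos[OF assms(1)] by simp
  ultimately show ?case using baseA[OF assms(1)] baseB[OF assms(1)] by simp
next
  case (step m)
  define P where "P = Gf (Suc m)"
  define a where "a = card {y\<in>A k. y < P}"
  define b where "b = card {y\<in>A k. y < Sf m + 1}"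
  have ab: "a = fib (2 * (m - k) + 3)" "b = fib (2 * (m - k) + 2)" using step.IH by (auto simp: a_def b_def P_def)
  have id: "Gf (Suc (Suc m)) = 2 * P + (Sf m + 1)" using Sf_id[of "Suc m"] by (simp add: Sf_Suc P_def)
  have sl: "Sf m + 1 \<le> P" using Sf_less[of m] by (simp add: P_def)
  have sh1: "\<forall>n<P. P + n \<in> A k \<longleftrightarrow> n \<in> A k" using shift1[OF step.hyps(1)] by (simp add: P_def)
  have sh2: "\<forall>n<Sf m + 1. 2 * P + n \<in> A k \<longleftrightarrow> n \<in> A k" using shift2[OF step.hyps(1)] by (simp add: P_def)
  have c1: "card {y\<in>A k. y < P + P} = a + a"
    using card_split[of P "P + P" "A k"] card_shift[OF sh1, of P] by (simp add: a_def)
  have "card {y\<in>A k. y < 2 * P + (Sf m + 1)} = card {y\<in>A k. y < P + P} + b"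
    using card_split[of "2 * P" "2 * P + (Sf m + 1)" "A k"] card_shift[OF sh2, of "Sf m + 1"]
    by (simp add: b_def mult_2)
  then have A1: "card {y\<in>A k. y < Gf (Suc (Suc m))} = 2 * a + b" using c1 id by simp
  have "card {y\<in>A k. y < P + (Sf m + 1)} = a + b"
    using card_split[of P "P + (Sf m + 1)" "A k"] card_shift[OF sh1, of "Sf m + 1"] sl
    by (simp add: a_def b_def)
  then have A2: "card {y\<in>A k. y < Sf (Suc m) + 1} = a + b" by (simp add: Sf_Suc P_def add.commute add.left_commute)
  have d: "Suc m - k = Suc (m - k)" using step.hyps(1) by simp
  show ?case unfolding d fibs using A1 A2 ab by simp
qed


lemma card_less_enum:
  fixes S :: "nat set"
  assumes "infinite S"
  shows "card {y\<in>S. y < enumerate S n} = n"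
proof -
  have "{y\<in>S. y < enumerate S n} = enumerate S ` {..<n}"
  proof (intro set_eqI iffI)
    fix y assume y: "y \<in> {y\<in>S. y < enumerate S n}"
    then obtain t where t: "enumerate S t = y" using enumerate_Ex[OF assms] by blast
    then have "t < n" using y assms by auto
    then show "y \<in> enumerate S ` {..<n}" using t by auto
  qed (use assms enumerate_in_set in auto)
  moreover have "inj_on (enumerate S) {..<n}" using inj_enumerate[OF assms] by (metis inj_on_subset top_greatest)
  ultimately show ?thesis by (simp add: card_image)
qed

lemma enum_of_card:
  fixes S :: "nat set"
  assumes "infinite S" "x \<in> S"
  shows "enumerate S (card {y\<in>S. y < x}) = x"
proof -
  obtain t where t: "enumerate S t = x" using enumerate_Ex[OF assms] by blast
  then show ?thesis using card_less_enum[OF assms(1), of t] by simp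
qed

theorem proposition4p1:
  fixes k l j :: nat
  assumes "1 \<le> k" and "1 \<le> l"
    and "1 + fib (2 * l + 1) \<le> j" and "j \<le> fib (2 * l + 3) - 1"
  shows "int (q k (j + 1)) - int (q k j) =
         int (q k (j - fib (2 * l + 1) + 1)) - int (q k (j - fib (2 * l + 1)))"
proof -
  define m where "m = k + l - 1"
  have km: "k \<le> m" "Suc m = k + l" using assms(1,2) by (auto simp: m_def)
  define P where "P = Gf (Suc m)"
  define F where "F = fib (2 * l + 1)"
  define F2 where "F2 = fib (2 * l)"
  have inf: "infinite (A k)" using A_infinite[OF assms(1)] .
  have mk: "m - k = l - 1" using assms by (simp add: m_def)
  have l2: "2 * (l - 1) + 3 = 2 * l + 1" "2 * (l - 1) + 2 = 2 * l" using assms(2) by auto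
  have cF: "card {y\<in>A k. y < P} = F" and cF2: "card {y\<in>A k. y < Sf m + 1} = F2"
    using counts[OF assms(1) km(1)] unfolding mk l2 by (auto simp: P_def F_def F2_def)
  obtain d where d: "l = Suc d" using assms(2) by (cases l) auto
  have e: "2*d+3 = 2*l+1" "2*d+2 = 2*l" using d by simp_all
  have f3: "fib (2 * l + 3) = 2 * F + F2"
    using fibs(1)[of d] unfolding F_def F2_def e d[symmetric] .
  have F2F: "F2 \<le> F" unfolding F_def F2_def by (rule fib_mono) simp
  have F2pos: "1 \<le> F2" unfolding F2_def using fib_neq_0_nat[of "2 * l"] assms(2) by simp
  have sl: "Sf m + 1 \<le> P" using Sf_less[of m] by (simp add: P_def)
  have sh1: "\<forall>n<P. P + n \<in> A k \<longleftrightarrow> n \<in> A k" using shift1[OF km(1)] by (simp add: P_def)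
  have sh2: "\<forall>n<Sf m + 1. 2 * P + n \<in> A k \<longleftrightarrow> n \<in> A k" using shift2[OF km(1)] by (simp add: P_def)
  have qc: "card {y\<in>A k. y < q k i} = i - 1" for i
    unfolding q_def using card_less_enum[OF inf] .
  have qA: "q k i \<in> A k" for i unfolding q_def using enumerate_in_set[OF inf] .
  have qe: "q k (Suc t) = x" if "x \<in> A k" "card {y\<in>A k. y < x} = t" for x t
    unfolding q_def using enum_of_card[OF inf that(1)] that(2) by simp
  have blk1: "q k (F + i) = P + q k i" if i: "1 \<le> i" "i \<le> F" for i
  proof -
    define x where "x = q k i"
    have cx: "card {y\<in>A k. y < x} = i - 1" using qc by (simp add: x_def)
    have xP: "x < P"
    proof (rule ccontr)
      assume "\<not> x < P"
      then have "{y\<in>A k. y < P} \<subseteq> {y\<in>A k. y < x}" by auto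
      then have "card {y\<in>A k. y < P} \<le> card {y\<in>A k. y < x}" by (intro card_mono) auto
      then have "F \<le> i - 1" using cF cx by simp
      then show False using i by simp
    qed
    have inA: "P + x \<in> A k" using sh1 xP qA by (simp add: x_def)
    have "card {y\<in>A k. y < P + x} = F + (i - 1)"
      using card_split[of P "P + x" "A k"] card_shift[OF sh1, of x] xP cF cx by simp
    then have "q k (Suc (F + (i - 1))) = P + x" using qe[OF inA] by simp
    moreover have "Suc (F + (i - 1)) = F + i" using i by simp
    ultimately show ?thesis by (simp add: x_def)
  qed
  have blk2: "q k (2 * F + i) = 2 * P + q k i" if i: "1 \<le> i" "i \<le> F2" for i
  proof -
    define x where "x = q k i"
    have cx: "card {y\<in>A k. y < x} = i - 1" using qc by (simp add: x_def)
    have xP: "x < Sf m + 1"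
    proof (rule ccontr)
      assume "\<not> x < Sf m + 1"
      then have "{y\<in>A k. y < Sf m + 1} \<subseteq> {y\<in>A k. y < x}" by auto
      then have "card {y\<in>A k. y < Sf m + 1} \<le> card {y\<in>A k. y < x}" by (intro card_mono) auto
      then have "F2 \<le> i - 1" using cF2 cx by simp
      then show False using i by simp
    qed
    have inA: "2 * P + x \<in> A k" using sh2 xP qA by (simp add: x_def)
    have c1: "card {y\<in>A k. y < P + P} = F + F"
      using card_split[of P "P + P" "A k"] card_shift[OF sh1, of P] cF by simp
    have "card {y\<in>A k. y < 2 * P + x} = F + F + (i - 1)"
      using card_split[of "2 * P" "2 * P + x" "A k"] card_shift[OF sh2, of x] xP cx c1
      by (simp add: mult_2)
    then have "q k (Suc (2 * F + (i - 1))) = 2 * P + x" using qe[OF inA] by (simp add: mult_2)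
    moreover have "Suc (2 * F + (i - 1)) = 2 * F + i" using i by simp
    ultimately show ?thesis by (simp add: x_def)
  qed
  have jF: "F + 1 \<le> j" "j + 1 \<le> 2 * F + F2" using assms(3,4) f3 by (simp_all add: F_def)
  have rhs: "j - fib (2 * l + 1) = j - F" by (simp add: F_def)
  consider "j + 1 \<le> 2 * F" | "j = 2 * F" | "2 * F + 1 \<le> j" by linarith
  then show ?thesis
  proof cases
    case 1
    have a: "q k j = P + q k (j - F)" using blk1[of "j - F"] jF 1 by simp
    have b: "q k (j + 1) = P + q k (j - F + 1)" using blk1[of "j - F + 1"] jF 1 by simp
    show ?thesis unfolding rhs a b by simp
  next
    case 2
    have a: "q k j = P + q k F" using blk1[of F] 2 F2pos F2F by (simp add: mult_2)
    have b: "q k (j + 1) = 2 * P + q k 1" using blk2[of 1] 2 F2pos by simp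
    have c: "q k (F + 1) = P + q k 1" using blk1[of 1] 2 F2pos F2F by simp
    have d: "j - F = F" using 2 by simp
    show ?thesis unfolding rhs d using a b c by simp
  next
    case 3
    have a: "q k j = 2 * P + q k (j - 2 * F)" using blk2[of "j - 2 * F"] jF 3 by simp
    have b: "q k (j + 1) = 2 * P + q k (j - 2 * F + 1)" using blk2[of "j - 2 * F + 1"] jF 3 by simp
    have c: "q k (j - F) = P + q k (j - 2 * F)" using blk1[of "j - 2 * F"] jF 3 F2F by simp
    have d: "q k (j - F + 1) = P + q k (j - 2 * F + 1)" using blk1[of "j - 2 * F + 1"] jF 3 F2F by simp
    show ?thesis unfolding rhs a b c d by simp
  qed
qed

end
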